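(* Let $k\in\mathbb N_0$. Let $S$ be the basic spinor representation of $Spin(3)$, realized as a $2$-dimensional irreducible left module over the complex Clifford algebra $\mathbb C_3$ (generated by $e_1,e_2,e_3$ with $e_je_l+e_le_j=-2\delta_{jl}$), and let $v^{\pm}$ be nonzero vectors with $-ie_{12}v^{\pm}=\pm v^{\pm}$ (where $e_{ij}=e_ie_j$). Let $\mathcal M_k(\mathbb R^3,S)$ be the space of $S$-valued polynomials $P$ on $\mathbb R^3$, homogeneous of degree $k$, with $\partial P=0$, where $\partial=e_1\frac{\partial}{\partial x_1}+e_2\frac{\partial}{\partial x_2}+e_3\frac{\partial}{\partial x_3}$. Consider on it the operators $$\tilde H=-i\Big(\frac{e_{12}}{2}+x_2\frac{\partial}{\partial x_1}-x_1\frac{\partial}{\partial x_2}\Big),\quad \tilde X^{\pm}=X^{\pm}+\omega^{\pm},$$ where $X^{+}=-2x_3\frac{\partial}{\partial z}+\overline z\frac{\partial}{\partial x_3}$, $X^{-}=2x_3\frac{\partial}{\partial\overline z}- z\frac{\partial}{\partial x_3}$, $z=x_1+ix_2$, $\frac{\partial}{\partial z}=\frac12(\partial_{x_1}-i\partial_{x_2})$, $\frac{\partial}{\partial \overline z}=\frac12(\partial_{x_1}+i\partial_{x_2})$, and $\omega^+=\frac12(e_{31}+ie_{23})$, $\omega^-=\frac12(-e_{31}+ie_{23})$ act by left multiplication. Then the (irreducible) $\mathfrak{sl}(2,\mathbb C)$-module $\mathcal M_k(\mathbb R^3,S)$ has a basis consisting of the polynomials $$F^k_0=\frac{1}{k!\,2^k}\,\overline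 z^k v^+\quad\text{and}\quad F^k_j=(\tilde X^-)^jF^k_0,\ \ 0<j\le 2k+1.$$ In addition, for each $j=0,\dots,2k+1$, $F^k_j$ is a weight vector with weight $k+\frac12-j$, i.e. $\tilde H F^k_j=(k+\frac12-j)F^k_j$.
   Context: The operators $\tilde H,\tilde X^+,\tilde X^-$ satisfy $[\tilde X^+,\tilde X^-]=2\tilde H$ and $[\tilde H,\tilde X^\pm]=\pm\tilde X^\pm$; they are the complexified infinitesimal action $L_{ij}=\frac{e_{ij}}2+x_j\partial_{x_i}-x_i\partial_{x_j}$ of $\mathfrak{so}(3)$ on $S$-valued polynomials, via $\tilde H=-iL_{12}$, $\tilde X^+=L_{31}+iL_{23}$, $\tilde X^-=-L_{31}+iL_{23}$. *)

theory Defs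
  imports "HOL-Analysis.Analysis" "HOL-Library.Function_Algebras"
begin

text \<open>S-valued polynomials on R^3, with S realised as C^2 (Clifford generators acting
by 2x2 complex matrices).  A polynomial is given by its coefficient function:
P (a,b,c) is the coefficient of x1^a x2^b x3^c (finitely supported, in fact
we only use homogeneous ones).\<close>

type_synonym spoly = "nat \<times> nat \<times> nat \<Rightarrow> complex^2"

definition homog :: "nat \<Rightarrow> spoly \<Rightarrow> bool" where
  "homog k P \<longleftrightarrow> (\<forall>a b c. a + b + c \<noteq> k \<longrightarrow> P (a,b,c) = 0)"

definition sc :: "complex \<Rightarrow> spoly \<Rightarrow> spoly" where
  "sc t P = (\<lambda>m. t *s P m)"

definition cl :: "complex^2^2 \<Rightarrow> spoly \<Rightarrow> spoly" where
  "cl M P = (\<lambda>m. M *v P m)"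

definition const_poly :: "complex^2 \<Rightarrow> spoly" where
  "const_poly v = (\<lambda>m. if m = (0,0,0) then v else 0)"

definition dx1 :: "spoly \<Rightarrow> spoly" where
  "dx1 P = (\<lambda>(a,b,c). of_nat (a+1) *s P (a+1,b,c))"
definition dx2 :: "spoly \<Rightarrow> spoly" where
  "dx2 P = (\<lambda>(a,b,c). of_nat (b+1) *s P (a,b+1,c))"
definition dx3 :: "spoly \<Rightarrow> spoly" where
  "dx3 P = (\<lambda>(a,b,c). of_nat (c+1) *s P (a,b,c+1))"

definition mx1 :: "spoly \<Rightarrow> spoly" where
  "mx1 P = (\<lambda>(a,b,c). if a = 0 then 0 else P (a-1,b,c))"
definition mx2 :: "spoly \<Rightarrow> spoly" where
  "mx2 P = (\<lambda>(a,b,c). if b = 0 then 0 else P (a,b-1,c))"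
definition mx3 :: "spoly \<Rightarrow> spoly" where
  "mx3 P = (\<lambda>(a,b,c). if c = 0 then 0 else P (a,b,c-1))"

definition mz :: "spoly \<Rightarrow> spoly" where
  "mz P = mx1 P + sc \<i> (mx2 P)"
definition mzbar :: "spoly \<Rightarrow> spoly" where
  "mzbar P = mx1 P - sc \<i> (mx2 P)"
definition dz :: "spoly \<Rightarrow> spoly" where
  "dz P = sc (1/2) (dx1 P - sc \<i> (dx2 P))"
definition dzbar :: "spoly \<Rightarrow> spoly" where
  "dzbar P = sc (1/2) (dx1 P + sc \<i> (dx2 P))"

definition dirac :: "complex^2^2 \<Rightarrow> complex^2^2 \<Rightarrow> complex^2^2 \<Rightarrow> spoly \<Rightarrow> spoly" where
  "dirac E1 E2 E3 P = cl E1 (dx1 P) + cl E2 (dx2 P) + cl E3 (dx3 P)"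

definition Mk :: "complex^2^2 \<Rightarrow> complex^2^2 \<Rightarrow> complex^2^2 \<Rightarrow> nat \<Rightarrow> spoly set" where
  "Mk E1 E2 E3 k = {P. homog k P \<and> dirac E1 E2 E3 P = 0}"

definition Htil :: "complex^2^2 \<Rightarrow> complex^2^2 \<Rightarrow> spoly \<Rightarrow> spoly" where
  "Htil E1 E2 P = sc (-\<i>) (sc (1/2) (cl (E1 ** E2) P) + mx2 (dx1 P) - mx1 (dx2 P))"

definition Xplus :: "spoly \<Rightarrow> spoly" where
  "Xplus P = sc (-2) (mx3 (dz P)) + mzbar (dx3 P)"
definition Xminus :: "spoly \<Rightarrow> spoly" where
  "Xminus P = sc 2 (mx3 (dzbar P)) - mz (dx3 P)"

definition omega_plus :: "complex^2^2 \<Rightarrow> complex^2^2 \<Rightarrow> complex^2^2 \<Rightarrow> spoly \<Rightarrow> spoly" where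
  "omega_plus E1 E2 E3 P = sc (1/2) (cl (E3 ** E1) P + sc \<i> (cl (E2 ** E3) P))"
definition omega_minus :: "complex^2^2 \<Rightarrow> complex^2^2 \<Rightarrow> complex^2^2 \<Rightarrow> spoly \<Rightarrow> spoly" where
  "omega_minus E1 E2 E3 P = sc (1/2) (- cl (E3 ** E1) P + sc \<i> (cl (E2 ** E3) P))"

definition Xtil_plus where
  "Xtil_plus E1 E2 E3 P = Xplus P + omega_plus E1 E2 E3 P"
definition Xtil_minus where
  "Xtil_minus E1 E2 E3 P = Xminus P + omega_minus E1 E2 E3 P"

definition F0 :: "nat \<Rightarrow> complex^2 \<Rightarrow> spoly" where
  "F0 k v = sc (1 / (of_nat (fact k) * 2 ^ k)) ((mzbar ^^ k) (const_poly v))"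
definition Fj :: "complex^2^2 \<Rightarrow> complex^2^2 \<Rightarrow> complex^2^2 \<Rightarrow> nat \<Rightarrow> complex^2 \<Rightarrow> nat \<Rightarrow> spoly" where
  "Fj E1 E2 E3 k v j = (Xtil_minus E1 E2 E3 ^^ j) (F0 k v)"

definition is_basis_fam :: "(nat \<Rightarrow> spoly) \<Rightarrow> nat \<Rightarrow> spoly set \<Rightarrow> bool" where
  "is_basis_fam F n V \<longleftrightarrow>
     (\<forall>j\<le>n. F j \<in> V) \<and>
     (\<forall>c. (\<Sum>j\<le>n. sc (c j) (F j)) = 0 \<longrightarrow> (\<forall>j\<le>n. c j = 0)) \<and>
     (\<forall>P\<in>V. \<exists>c. P = (\<Sum>j\<le>n. sc (c j) (F j)))"

end

theory Submission
  imports Defs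
begin


lemma sc_app[simp]: "sc t P m = t *s P m" by (simp add: sc_def)
lemma cl_app[simp]: "cl M P m = M *v P m" by (simp add: cl_def)
lemma dx1_app[simp]: "dx1 P (a,b,c) = of_nat (a+1) *s P (a+1,b,c)" by (simp add: dx1_def)
lemma dx2_app[simp]: "dx2 P (a,b,c) = of_nat (b+1) *s P (a,b+1,c)" by (simp add: dx2_def)
lemma dx3_app[simp]: "dx3 P (a,b,c) = of_nat (c+1) *s P (a,b,c+1)" by (simp add: dx3_def)
lemma mx1_0[simp]: "mx1 P (0,b,c) = 0" by (simp add: mx1_def)
lemma mx1_S[simp]: "mx1 P (Suc a,b,c) = P (a,b,c)" by (simp add: mx1_def)
lemma mx2_0[simp]: "mx2 P (a,0,c) = 0" by (simp add: mx2_def)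
lemma mx2_S[simp]: "mx2 P (a,Suc b,c) = P (a,b,c)" by (simp add: mx2_def)
lemma mx3_0[simp]: "mx3 P (a,b,0) = 0" by (simp add: mx3_def)
lemma mx3_S[simp]: "mx3 P (a,b,Suc c) = P (a,b,c)" by (simp add: mx3_def)
lemma nat3_cases: obtains "a = 0" | "a = Suc 0" | n where "a = Suc (Suc n)"
  by (metis not0_implies_Suc)

lemma mneg_r[simp]: "(A::complex^2^2) ** (- B) = - (A ** B)"
  by (simp add: matrix_matrix_mult_def vec_eq_iff sum_negf)
lemma mneg_l[simp]: "(- A::complex^2^2) ** B = - (A ** B)"
  by (simp add: matrix_matrix_mult_def vec_eq_iff sum_negf)
lemma mvneg[simp]: "(- A::complex^2^2) *v x = - (A *v x)"
  by (simp add: matrix_vector_mult_def vec_eq_iff sum_negf)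

lemma mvuminus[simp]: "(A::complex^2^2) *v (- x) = - (A *v x)"
  by (simp add: matrix_vector_mult_def vec_eq_iff sum_negf)

lemmas vsimps = vector_scalar_commute matrix_vector_right_distrib matrix_vector_mult_diff_distrib
   vector_smult_assoc vector_ssub_ldistrib vector_smult_rneg matrix_vector_mul_assoc
   vector_add_ldistrib matrix_mul_assoc[symmetric]

lemmas compsimps = vec_eq_iff vector_add_component vector_mult_component vector_smult_component
  vector_minus_component vector_uminus_component zero_index numeral_index one_index
lemmas opdefs = Htil_def Xtil_minus_def Xminus_def omega_minus_def mz_def dzbar_def
  Xtil_plus_def Xplus_def omega_plus_def mzbar_def dz_def

lemma HZ:
  shows "Htil E1 E2 (mzbar P) = mzbar (Htil E1 E2 P) + mzbar P"
proof (rule ext, clarify)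
  fix a b c
  show "(Htil E1 E2 (mzbar P)) (a,b,c) = (mzbar (Htil E1 E2 P) + mzbar P) (a,b,c)"
    by (cases a rule: nat3_cases; cases b rule: nat3_cases; cases c rule: nat3_cases; simp add: opdefs; (simp only: vsimps mneg_r mneg_l mvneg mvuminus)?; (simp only: compsimps)?; (simp add: divide_simps)?; (simp add: algebra_simps)?)
qed
lemma DZ:
  shows "dirac E1 E2 E3 (mzbar P) = mzbar (dirac E1 E2 E3 P) + cl E1 P - sc \<i> (cl E2 P)"
proof (rule ext, clarify)
  fix a b c
  show "(dirac E1 E2 E3 (mzbar P)) (a,b,c) = (mzbar (dirac E1 E2 E3 P) + cl E1 P - sc \<i> (cl E2 P)) (a,b,c)"
    by (cases a rule: nat3_cases; cases b rule: nat3_cases; cases c rule: nat3_cases; simp add: opdefs dirac_def vsimps; (simp only: compsimps)?; (simp add: divide_simps)?; (simp add: algebra_simps)?)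
qed
lemma XZ:
  shows "Xtil_plus E1 E2 E3 (mzbar P) = mzbar (Xtil_plus E1 E2 E3 P)"
proof (rule ext, clarify)
  fix a b c
  show "(Xtil_plus E1 E2 E3 (mzbar P)) (a,b,c) = (mzbar (Xtil_plus E1 E2 E3 P)) (a,b,c)"
    by (cases a rule: nat3_cases; cases b rule: nat3_cases; cases c rule: nat3_cases; simp add: opdefs  vsimps; (simp only: compsimps)?; (simp add: divide_simps)?; (simp add: algebra_simps)?)
qed
lemma clZ:
  shows "cl M (mzbar P) = mzbar (cl M P)"
proof (rule ext, clarify)
  fix a b c
  show "(cl M (mzbar P)) (a,b,c) = (mzbar (cl M P)) (a,b,c)"
    by (cases a rule: nat3_cases; cases b rule: nat3_cases; cases c rule: nat3_cases; simp add: opdefs  vsimps; (simp only: compsimps)?; (simp add: divide_simps)?; (simp add: algebra_simps)?)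
qed
lemma Hc:
  shows "Htil E1 E2 (const_poly v) = const_poly ((-\<i>/2) *s ((E1**E2) *v v))"
proof (rule ext, clarify)
  fix a b c
  show "(Htil E1 E2 (const_poly v)) (a,b,c) = (const_poly ((-\<i>/2) *s ((E1**E2) *v v))) (a,b,c)"
    by (cases a; cases b; cases c; simp add: opdefs const_poly_def vsimps; (simp only: compsimps)?; (simp add: divide_simps)?; (simp add: algebra_simps)?)
qed
lemma Dc:
  shows "dirac E1 E2 E3 (const_poly v) = 0"
proof (rule ext, clarify)
  fix a b c
  show "(dirac E1 E2 E3 (const_poly v)) (a,b,c) = (0) (a,b,c)"
    by (cases a; cases b; cases c; simp add: opdefs const_poly_def dirac_def vsimps; (simp only: compsimps)?; (simp add: divide_simps)?; (simp add: algebra_simps)?)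
qed
lemma Xc:
  shows "Xtil_plus E1 E2 E3 (const_poly v) = const_poly ((1/2) *s ((E3**E1) *v v + \<i> *s ((E2**E3) *v v)))"
proof (rule ext, clarify)
  fix a b c
  show "(Xtil_plus E1 E2 E3 (const_poly v)) (a,b,c) = (const_poly ((1/2) *s ((E3**E1) *v v + \<i> *s ((E2**E3) *v v)))) (a,b,c)"
    by (cases a; cases b; cases c; simp add: opdefs const_poly_def vsimps; (simp only: compsimps)?; (simp add: divide_simps)?; (simp add: algebra_simps)?)
qed
lemma clc:
  shows "cl M (const_poly v) = const_poly (M *v v)"
proof (rule ext, clarify)
  fix a b c
  show "(cl M (const_poly v)) (a,b,c) = (const_poly (M *v v)) (a,b,c)"
    by (cases a; cases b; cases c; simp add: opdefs const_poly_def vsimps; (simp only: compsimps)?; (simp add: divide_simps)?; (simp add: algebra_simps)?)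
qed
locale cliff =
  fixes E1 E2 E3 :: "complex^2^2"
  assumes c1: "E1 ** E1 = - mat 1" and c2: "E2 ** E2 = - mat 1" and c3: "E3 ** E3 = - mat 1"
    and a12: "E1 ** E2 + E2 ** E1 = 0" and a13: "E1 ** E3 + E3 ** E1 = 0" and a23: "E2 ** E3 + E3 ** E2 = 0"
begin
lemma r21: "E2 ** E1 = - (E1 ** E2)" using a12 by (simp add: eq_neg_iff_add_eq_0 add.commute)
lemma r31: "E3 ** E1 = - (E1 ** E3)" using a13 by (simp add: eq_neg_iff_add_eq_0 add.commute)
lemma r32: "E3 ** E2 = - (E2 ** E3)" using a23 by (simp add: eq_neg_iff_add_eq_0 add.commute)
lemma r21': "E2 ** (E1 ** Y) = - (E1 ** (E2 ** Y))" by (simp add: matrix_mul_assoc r21)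
lemma r31': "E3 ** (E1 ** Y) = - (E1 ** (E3 ** Y))" by (simp add: matrix_mul_assoc r31)
lemma r32': "E3 ** (E2 ** Y) = - (E2 ** (E3 ** Y))" by (simp add: matrix_mul_assoc r32)
lemma c1': "E1 ** (E1 ** Y) = - Y" by (simp add: matrix_mul_assoc c1)
lemma c2': "E2 ** (E2 ** Y) = - Y" by (simp add: matrix_mul_assoc c2)
lemma c3': "E3 ** (E3 ** Y) = - Y" by (simp add: matrix_mul_assoc c3)
lemmas crules = r21 r31 r32 r21' r31' r32' c1 c2 c3 c1' c2' c3'

lemmas fin = vec_eq_iff divide_simps algebra_simps complex_i_mult_minus
lemma HX:
  shows "Htil E1 E2 (Xtil_minus E1 E2 E3 P) = Xtil_minus E1 E2 E3 (Htil E1 E2 P) - Xtil_minus E1 E2 E3 P"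
proof (rule ext, clarify)
  fix a b c
  show "Htil E1 E2 (Xtil_minus E1 E2 E3 P) (a,b,c) = (Xtil_minus E1 E2 E3 (Htil E1 E2 P) - Xtil_minus E1 E2 E3 P) (a,b,c)"
    by (cases a rule: nat3_cases; cases b rule: nat3_cases; cases c rule: nat3_cases; simp add: opdefs; (simp only: vsimps mneg_r mneg_l mvneg mvuminus crules matrix_vector_mul_lid minus_minus)?; (simp only: compsimps)?; (simp add: divide_simps)?; (simp add: algebra_simps)?)
qed
lemma DX:
  shows "dirac E1 E2 E3 (Xtil_minus E1 E2 E3 P) = Xtil_minus E1 E2 E3 (dirac E1 E2 E3 P)"
proof (rule ext, clarify)
  fix a b c
  show "(dirac E1 E2 E3 (Xtil_minus E1 E2 E3 P)) (a,b,c) = (Xtil_minus E1 E2 E3 (dirac E1 E2 E3 P)) (a,b,c)"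
    by (cases a rule: nat3_cases; cases b rule: nat3_cases; cases c rule: nat3_cases; simp add: opdefs dirac_def vsimps; (simp add: crules)?; (simp only: compsimps)?; (simp add: divide_simps)?; (simp add: algebra_simps)?)
qed
lemma XX:
  shows "Xtil_plus E1 E2 E3 (Xtil_minus E1 E2 E3 P) = Xtil_minus E1 E2 E3 (Xtil_plus E1 E2 E3 P) + sc 2 (Htil E1 E2 P)"
proof (rule ext, clarify)
  fix a b c
  show "(Xtil_plus E1 E2 E3 (Xtil_minus E1 E2 E3 P)) (a,b,c) = (Xtil_minus E1 E2 E3 (Xtil_plus E1 E2 E3 P) + sc 2 (Htil E1 E2 P)) (a,b,c)"
    by (cases a rule: nat3_cases; cases b rule: nat3_cases; cases c rule: nat3_cases; simp add: opdefs  vsimps; (simp add: crules)?; (simp only: compsimps)?; (simp add: divide_simps)?; (simp add: algebra_simps)?)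
qed
end



interpretation SP: vector_space sc
  by unfold_locales (simp_all add: sc_def fun_eq_iff vector_add_ldistrib vector_sadd_rdistrib vector_smult_assoc)


definition "lin f \<longleftrightarrow> module_hom sc sc (f::spoly \<Rightarrow> spoly)"

lemma linI: "(\<And>P Q. f (P + Q) = f P + f Q) \<Longrightarrow> (\<And>t P. f (sc t P) = sc t (f P)) \<Longrightarrow> lin f"
  unfolding lin_def module_hom_iff using SP.module_axioms by blast
lemma lin_add: "lin f \<Longrightarrow> f (P + Q) = f P + f Q" unfolding lin_def using module_hom.add by blast
lemma lin_sc: "lin f \<Longrightarrow> f (sc t P) = sc t (f P)" unfolding lin_def using module_hom.scale by blast
lemma lin_diff: "lin f \<Longrightarrow> f (P - Q) = f P - f Q" unfolding lin_def using module_hom.diff by blast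
lemma lin_0: "lin f \<Longrightarrow> f 0 = 0" unfolding lin_def using module_hom.zero by blast
lemma lin_sum: "lin f \<Longrightarrow> f (sum g A) = (\<Sum>a\<in>A. f (g a))" unfolding lin_def using module_hom.sum by blast

declare plus_fun_apply[simp del] sc_app[simp del] cl_app[simp del]
lemma lin_comp: "lin f \<Longrightarrow> lin g \<Longrightarrow> lin (\<lambda>P. f (g P))"
  by (rule linI) (simp_all add: lin_add lin_sc)
lemma lin_plus: "lin f \<Longrightarrow> lin g \<Longrightarrow> lin (\<lambda>P. f P + g P)"
  by (rule linI) (simp_all add: lin_add lin_sc SP.scale_right_distrib)
lemma lin_minus: "lin f \<Longrightarrow> lin g \<Longrightarrow> lin (\<lambda>P. f P - g P)"
  by (rule linI) (simp_all add: lin_add lin_sc SP.scale_right_diff_distrib)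
lemma lin_neg: "lin f \<Longrightarrow> lin (\<lambda>P. - f P)"
  by (rule linI) (simp_all add: lin_add lin_sc SP.scale_minus_right)
lemma lin_scl: "lin f \<Longrightarrow> lin (\<lambda>P. sc t (f P))"
  by (rule linI) (simp_all add: lin_add lin_sc SP.scale_right_distrib mult.commute)
lemma lin_id: "lin (\<lambda>P. P)" by (rule linI) simp_all
lemma lin_dx1: "lin dx1" by (rule linI) (auto simp: fun_eq_iff plus_fun_apply sc_app cl_app dx1_def sc_def vector_add_ldistrib vector_smult_assoc mult.commute vector_sadd_rdistrib distrib_left)
lemma lin_dx2: "lin dx2" by (rule linI) (auto simp: fun_eq_iff plus_fun_apply sc_app cl_app dx2_def sc_def vector_add_ldistrib vector_smult_assoc mult.commute vector_sadd_rdistrib distrib_left)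
lemma lin_dx3: "lin dx3" by (rule linI) (auto simp: fun_eq_iff plus_fun_apply sc_app cl_app dx3_def sc_def vector_add_ldistrib vector_smult_assoc mult.commute vector_sadd_rdistrib distrib_left)
lemma lin_mx1: "lin mx1" by (rule linI) (auto simp: fun_eq_iff plus_fun_apply sc_app cl_app mx1_def sc_def)
lemma lin_mx2: "lin mx2" by (rule linI) (auto simp: fun_eq_iff plus_fun_apply sc_app cl_app mx2_def sc_def)
lemma lin_mx3: "lin mx3" by (rule linI) (auto simp: fun_eq_iff plus_fun_apply sc_app cl_app mx3_def sc_def)
lemma lin_cl: "lin (cl M)" by (rule linI) (auto simp: fun_eq_iff plus_fun_apply sc_app cl_app cl_def sc_def matrix_vector_right_distrib vector_scalar_commute)

lemmas lin_ops = lin_comp[OF lin_dx1] lin_comp[OF lin_dx2] lin_comp[OF lin_dx3] lin_comp[OF lin_mx1] lin_comp[OF lin_mx2] lin_comp[OF lin_mx3] lin_comp[OF lin_cl]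
lemmas lin_rules = lin_plus lin_minus lin_neg lin_scl lin_id lin_ops

lemma lin_mzbar: "lin mzbar"
proof -
  have "mzbar = (\<lambda>P. mx1 P - sc \<i> (mx2 P))" by (rule ext) (simp add: mzbar_def)
  then show ?thesis by (rule ssubst) (intro lin_rules)
qed
lemma lin_H: "lin (Htil E1 E2)"
proof -
  have "Htil E1 E2 = (\<lambda>P. sc (-\<i>) (sc (1/2) (cl (E1 ** E2) P) + mx2 (dx1 P) - mx1 (dx2 P)))" by (rule ext) (simp add: Htil_def)
  then show ?thesis by (rule ssubst) (intro lin_rules)
qed
lemma lin_X: "lin (Xtil_minus E1 E2 E3)"
proof -
  have "Xtil_minus E1 E2 E3 = (\<lambda>P. (sc 2 (mx3 (sc (1/2) (dx1 P + sc \<i> (dx2 P)))) - (mx1 (dx3 P) + sc \<i> (mx2 (dx3 P)))) 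
     + sc (1/2) (- cl (E3 ** E1) P + sc \<i> (cl (E2 ** E3) P)))" 
    by (rule ext) (simp add: Xtil_minus_def Xminus_def dzbar_def mz_def omega_minus_def)
  then show ?thesis by (rule ssubst) (intro lin_rules)
qed
lemma lin_Y: "lin (Xtil_plus E1 E2 E3)"
proof -
  have "Xtil_plus E1 E2 E3 = (\<lambda>P. (sc (-2) (mx3 (sc (1/2) (dx1 P - sc \<i> (dx2 P)))) + (mx1 (dx3 P) - sc \<i> (mx2 (dx3 P)))) 
     + sc (1/2) (cl (E3 ** E1) P + sc \<i> (cl (E2 ** E3) P)))" 
    by (rule ext) (simp add: Xtil_plus_def Xplus_def dz_def mzbar_def omega_plus_def)
  then show ?thesis by (rule ssubst) (intro lin_rules)
qed
lemma lin_D: "lin (dirac E1 E2 E3)"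
proof -
  have "dirac E1 E2 E3 = (\<lambda>P. cl E1 (dx1 P) + cl E2 (dx2 P) + cl E3 (dx3 P))" 
    by (rule ext) (simp add: dirac_def)
  then show ?thesis by (rule ssubst) (intro lin_rules)
qed


lemma sum_app: "(sum f A) x = (\<Sum>a\<in>A. f a x)"
  by (induct A rule: infinite_finite_induct) (simp_all add: plus_fun_apply)

lemma lin_pow: assumes "lin f" shows "lin (f ^^ n)"
proof (induct n)
  case 0 show ?case using lin_id by (simp add: id_def)
next
  case (Suc n) show ?case using lin_comp[OF assms Suc] by (simp add: comp_def)
qed

lemma const_sc: "const_poly (t *s v) = sc t (const_poly v)" by (auto simp: fun_eq_iff const_poly_def sc_app)
lemma const_diff: "const_poly (v - w) = const_poly v - const_poly w" by (auto simp: fun_eq_iff const_poly_def)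
lemma const_0: "const_poly 0 = 0" by (auto simp: fun_eq_iff const_poly_def)

definition "Zp j v = (mzbar ^^ j) (const_poly v)"

lemma Z_Suc: "Zp (Suc j) v = mzbar (Zp j v)" by (simp add: Zp_def)
lemma Z_0: "Zp 0 v = const_poly v" by (simp add: Zp_def)
lemma Z_sc: "sc t (Zp j v) = Zp j (t *s v)"
  unfolding Zp_def const_sc by (simp add: lin_sc[OF lin_pow[OF lin_mzbar]])
lemma Z_diff: "Zp j v - Zp j w = Zp j (v - w)"
  unfolding Zp_def const_diff by (simp add: lin_diff[OF lin_pow[OF lin_mzbar]])
lemma Z_zero: "Zp j 0 = 0"
  unfolding Zp_def const_0 by (simp add: lin_0[OF lin_pow[OF lin_mzbar]])
lemma Z_cl: "cl M (Zp j v) = Zp j (M *v v)"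
  by (induct j) (simp_all add: Z_0 Z_Suc clc clZ)
lemma Z_val: "Zp j v (j,0,0) = v"
proof (induct j)
  case 0 show ?case by (simp add: Z_0 const_poly_def)
next
  case (Suc j) show ?case using Suc by (simp add: Z_Suc mzbar_def sc_app)
qed

lemma homog_mzbar: assumes "homog n Q" shows "homog (Suc n) (mzbar Q)"
  unfolding homog_def
proof (intro allI impI)
  fix a b c assume h: "a + b + c \<noteq> Suc n"
  have hq: "\<And>a b c. a + b + c \<noteq> n \<Longrightarrow> Q (a,b,c) = 0" using assms by (simp add: homog_def)
  show "mzbar Q (a,b,c) = 0"
    using h by (cases a; cases b) (simp_all add: mzbar_def sc_app hq)
qed
lemma Z_homog: "homog j (Zp j v)"
proof (induct j)
  case 0 show ?case by (simp add: Z_0 homog_def const_poly_def)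
next
  case (Suc j) then show ?case by (simp add: Z_Suc homog_mzbar)
qed
lemma homog_sc: "homog n Q \<Longrightarrow> homog n (sc t Q)" by (simp add: homog_def sc_app)
lemma homog_X: assumes "homog n Q" shows "homog n (Xtil_minus E1 E2 E3 Q)"
  unfolding homog_def
proof (intro allI impI)
  fix a b c assume h: "a + b + c \<noteq> n"
  have hq: "\<And>a b c. a + b + c \<noteq> n \<Longrightarrow> Q (a,b,c) = 0" using assms by (simp add: homog_def)
  show "Xtil_minus E1 E2 E3 Q (a,b,c) = 0"
    using h by (cases a; cases b; cases c) (simp_all add: opdefs sc_app cl_app plus_fun_apply hq)
qed


lemma dirac_unique:
  assumes c3: "E3 ** E3 = - mat 1" and d: "dirac E1 E2 E3 Q = 0" and z: "\<And>a b. Q (a,b,0) = 0"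
  shows "Q = 0"
proof -
  have "\<forall>a b. Q (a,b,c) = 0" for c
  proof (induct c)
    case 0 then show ?case using z by simp
  next
    case (Suc c)
    show ?case
    proof (intro allI)
      fix a b
      define x where "x = of_nat (c+1) *s Q (a,b,Suc c)"
      have "dirac E1 E2 E3 Q (a,b,c) = 0" using d by simp
      then have "E3 *v x = 0"
        using Suc unfolding x_def by (simp add: dirac_def plus_fun_apply cl_app)
      then have "(E3 ** E3) *v x = 0" by (simp add: matrix_vector_mul_assoc[symmetric])
      then have x0: "x = 0" by (simp add: c3)
      have "Q (a,b,Suc c) = (1 / of_nat (c+1)) *s x"
        unfolding x_def vector_smult_assoc by (simp del: of_nat_Suc of_nat_add)
      then show "Q (a, b, Suc c) = 0" by (simp add: x0)
    qed
  qed
  then show ?thesis by (auto simp: fun_eq_iff)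
qed

declare minus_apply[simp del] uminus_apply[simp del] zero_fun_apply[simp del]

locale spin = cliff +
  fixes vp :: "complex^2" and k :: nat
  assumes vp_nz: "vp \<noteq> 0" and vp_eig: "(-\<i>) *s ((E1 ** E2) *v vp) = vp"
begin

abbreviation "X \<equiv> Xtil_minus E1 E2 E3"
abbreviation "Y \<equiv> Xtil_plus E1 E2 E3"
abbreviation "H \<equiv> Htil E1 E2"
abbreviation "D \<equiv> dirac E1 E2 E3"
abbreviation "F \<equiv> Fj E1 E2 E3 k vp"
definition "lam j = (of_nat k + 1/2 - of_nat j :: complex)"
definition "mu j = (of_nat (Suc j) * (2 * of_nat k + 1 - of_nat j) :: complex)"

lemma E12vp: "(E1 ** E2) *v vp = \<i> *s vp"
proof -
  have "\<i> *s ((-\<i>) *s ((E1 ** E2) *v vp)) = \<i> *s vp" using vp_eig by simp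
  then show ?thesis by (simp add: vector_smult_assoc)
qed
lemma E1vp: "E1 *v vp = \<i> *s (E2 *v vp)"
proof -
  have "E1 *v ((E1 ** E2) *v vp) = E1 *v (\<i> *s vp)" by (simp add: E12vp)
  then have "- (E2 *v vp) = \<i> *s (E1 *v vp)"
    by (simp add: matrix_vector_mul_assoc matrix_mul_assoc c1 vector_scalar_commute)
  then have "\<i> *s (- (E2 *v vp)) = \<i> *s (\<i> *s (E1 *v vp))" by simp
  then show ?thesis by (simp add: vector_smult_assoc vector_smult_rneg)
qed
lemma omvp: "(E3 ** E1) *v vp + \<i> *s ((E2 ** E3) *v vp) = 0"
proof -
  have "(E2 ** E3) *v vp = - (E3 *v (E2 *v vp))"
    by (simp add: matrix_vector_mul_assoc r32)
  then have "\<i> *s ((E2 ** E3) *v vp) = - (E3 *v (E1 *v vp))"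
    by (simp add: E1vp vector_scalar_commute vector_smult_rneg)
  then show ?thesis by (simp add: matrix_vector_mul_assoc)
qed

lemma ZH: "H (Zp j vp) = sc (of_nat j + 1/2) (Zp j vp)"
proof (induct j)
  case 0
  have e: "(-\<i>/2) *s ((E1 ** E2) *v vp) = (1/2) *s vp"
  proof -
    have "(-\<i>/2) *s ((E1 ** E2) *v vp) = (1/2) *s ((-\<i>) *s ((E1 ** E2) *v vp))"
      by (simp add: vector_smult_assoc)
    then show ?thesis by (simp only: vp_eig)
  qed
  show ?case by (simp only: Z_0 Hc e const_sc) simp
next
  case (Suc j)
  have "H (Zp (Suc j) vp) = sc (of_nat j + 1/2) (mzbar (Zp j vp)) + mzbar (Zp j vp)"
    by (simp only: Z_Suc HZ Suc lin_sc[OF lin_mzbar])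
  also have "\<dots> = sc (of_nat j + 1/2 + 1) (mzbar (Zp j vp))"
    by (simp only: SP.scale_left_distrib SP.scale_one)
  finally show ?case by (simp add: Z_Suc add_ac)
qed
lemma ZD: "D (Zp j vp) = 0"
proof (induct j)
  case 0 show ?case by (simp add: Z_0 Dc)
next
  case (Suc j)
  have "D (Zp (Suc j) vp) = mzbar (D (Zp j vp)) + cl E1 (Zp j vp) - sc \<i> (cl E2 (Zp j vp))"
    by (simp add: Z_Suc DZ)
  also have "\<dots> = Zp j (E1 *v vp - \<i> *s (E2 *v vp))"
    by (simp only: Suc lin_0[OF lin_mzbar] Z_cl Z_sc Z_diff add_0_left)
  also have "\<dots> = 0" by (simp add: E1vp Z_zero)
  finally show ?case .
qed
lemma ZY: "Y (Zp j vp) = 0"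
proof (induct j)
  case 0 show ?case by (simp only: Z_0 Xc omvp vector_smult_rzero const_0)
next
  case (Suc j) then show ?case by (simp only: Z_Suc XZ lin_0[OF lin_mzbar])
qed

lemma F_Suc: "F (Suc j) = X (F j)" by (simp add: Fj_def)
lemma F_0: "F 0 = sc (1 / (of_nat (fact k) * 2 ^ k)) (Zp k vp)" by (simp add: Fj_def F0_def Zp_def)

lemma FH: "H (F j) = sc (lam j) (F j)"
proof (induct j)
  case 0 show ?case by (simp add: F_0 lin_sc[OF lin_H] ZH lam_def mult.commute)
next
  case (Suc j)
  have "H (F (Suc j)) = X (H (F j)) - X (F j)" by (simp add: F_Suc HX)
  also have "\<dots> = sc (lam j - 1) (X (F j))" 
    by (simp add: Suc lin_sc[OF lin_X] SP.scale_left_diff_distrib)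
  finally show ?case by (simp add: F_Suc lam_def algebra_simps)
qed
lemma FD: "D (F j) = 0"
  by (induct j) (simp_all add: F_0 F_Suc lin_sc[OF lin_D] ZD DX lin_0[OF lin_X])
lemma Fhom: "homog k (F j)"
  by (induct j) (simp_all add: F_0 F_Suc homog_sc Z_homog homog_X)
lemma FMk: "F j \<in> Mk E1 E2 E3 k"
  by (simp add: Mk_def Fhom FD)
lemma FY0: "Y (F 0) = 0"
  by (simp add: F_0 lin_sc[OF lin_Y] ZY)
lemma FY: "Y (F (Suc j)) = sc (mu j) (F j)"
proof (induct j)
  case 0 show ?case 
    by (simp add: F_Suc XX FY0 lin_0[OF lin_X] FH mu_def lam_def algebra_simps)
next
  case (Suc j)
  have "Y (F (Suc (Suc j))) = X (Y (F (Suc j))) + sc 2 (H (F (Suc j)))" by (simp add: F_Suc XX)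
  also have "\<dots> = X (sc (mu j) (F j)) + sc 2 (sc (lam (Suc j)) (F (Suc j)))" by (simp only: Suc FH)
  also have "\<dots> = sc (mu j + 2 * lam (Suc j)) (F (Suc j))"
    by (simp only: lin_sc[OF lin_X] F_Suc[symmetric] SP.scale_scale SP.scale_left_distrib)
  finally show ?case by (simp add: mu_def lam_def algebra_simps)
qed


lemma Fnz: "j \<le> 2*k+1 \<Longrightarrow> F j \<noteq> 0"
proof (induct j)
  case 0
  have "F 0 (k,0,0) = (1 / (of_nat (fact k) * 2 ^ k)) *s vp" by (simp add: F_0 sc_app Z_val)
  moreover have "(1 / (of_nat (fact k) * 2 ^ k) :: complex) \<noteq> 0" by simp
  ultimately show ?case using vp_nz by (auto simp: zero_fun_apply)
next
  case (Suc j)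
  have jk: "j \<le> 2*k+1" using Suc.prems by simp
  have e: "(2 * of_nat k + 1 - of_nat j :: complex) = of_nat (2*k+1-j)"
    using Suc.prems by (simp add: of_nat_diff)
  have "2*k+1-j \<noteq> 0" using Suc.prems by simp
  then have mnz: "mu j \<noteq> 0" unfolding mu_def e by (simp del: of_nat_Suc)
  show ?case
  proof
    assume "F (Suc j) = 0"
    then have "sc (mu j) (F j) = 0" using FY[of j] lin_0[OF lin_Y] by simp
    then have "F j = 0" using mnz by simp
    then show False using Suc.hyps jk by simp
  qed
qed

lemma Findep: "n \<le> 2*k+1 \<Longrightarrow> (\<Sum>j\<le>n. sc (c j) (F j)) = 0 \<Longrightarrow> \<forall>j\<le>n. c j = 0"
proof (induct n arbitrary: c)
  case 0 then show ?case using Fnz[of 0] by simp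
next
  case (Suc n)
  define l where "l = lam (Suc n)"
  have S0: "(\<Sum>j\<le>Suc n. sc (c j) (F j)) = 0" by fact
  have h1: "H (\<Sum>j\<le>Suc n. sc (c j) (F j)) = (\<Sum>j\<le>Suc n. sc (c j * lam j) (F j))"
    by (simp only: lin_sum[OF lin_H] lin_sc[OF lin_H] FH SP.scale_scale)
  have h2: "sc l (\<Sum>j\<le>Suc n. sc (c j) (F j)) = (\<Sum>j\<le>Suc n. sc (l * c j) (F j))"
    by (simp only: SP.scale_sum_right SP.scale_scale)
  have "(\<Sum>j\<le>Suc n. sc (c j * lam j) (F j)) - (\<Sum>j\<le>Suc n. sc (l * c j) (F j)) = 0"
    using S0 h1 h2 by (simp add: lin_0[OF lin_H])
  moreover have "\<And>j. sc (c j * lam j) (F j) - sc (l * c j) (F j) = sc (c j * (lam j - l)) (F j)"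
    by (simp add: SP.scale_left_diff_distrib[symmetric] right_diff_distrib mult.commute)
  ultimately have "(\<Sum>j\<le>Suc n. sc (c j * (lam j - l)) (F j)) = 0"
    by (simp only: sum_subtractf[symmetric])
  then have "(\<Sum>j\<le>n. sc (c j * (lam j - l)) (F j)) = 0"
    by (simp add: l_def)
  then have h: "\<forall>j\<le>n. c j * (lam j - l) = 0" using Suc.hyps[of "\<lambda>j. c j * (lam j - l)"] Suc.prems by simp
  have cj: "\<forall>j\<le>n. c j = 0"
  proof (intro allI impI)
    fix j assume "j \<le> n"
    then have "lam j - l = of_nat (Suc n - j)" unfolding l_def lam_def by (simp add: of_nat_diff)
    moreover have "Suc n - j \<noteq> 0" using \<open>j \<le> n\<close> by simp
    ultimately have "lam j - l \<noteq> 0" by (simp del: of_nat_Suc)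
    then show "c j = 0" using h \<open>j \<le> n\<close> by auto
  qed
  then have "sc (c (Suc n)) (F (Suc n)) = 0" using S0 by simp
  then have "c (Suc n) = 0" using Fnz[of "Suc n"] Suc.prems by simp
  then show ?case using cj le_Suc_eq by auto
qed

lemma Finj: "inj_on F {..2*k+1}"
proof (rule inj_onI)
  fix i j assume i: "i \<in> {..2*k+1}" and j: "j \<in> {..2*k+1}" and e: "F i = F j"
  have "sc (lam i) (F i) = sc (lam j) (F i)" using FH[of i] FH[of j] e by metis
  moreover have "F i \<noteq> 0" using Fnz i by simp
  ultimately have "lam i = lam j" by (metis SP.scale_cancel_right)
  then show "i = j" by (simp add: lam_def)
qed

end

definition restr :: "spoly \<Rightarrow> spoly" where "restr Q = (\<lambda>(a,b,c). if c = 0 then Q (a,b,c) else 0)"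
definition single :: "nat \<times> nat \<times> nat \<Rightarrow> complex^2 \<Rightarrow> spoly" where "single m v = (\<lambda>m'. if m' = m then v else 0)"

lemma lin_restr: "lin restr"
  by (rule linI) (auto simp: fun_eq_iff restr_def plus_fun_apply sc_app)

lemma restr_exp: assumes "homog k Q" shows "restr Q = (\<Sum>a\<le>k. single (a,k-a,0) (Q (a,k-a,0)))"
proof (rule ext, clarify)
  fix a' b' c'
  have hq: "\<And>a b c. a + b + c \<noteq> k \<Longrightarrow> Q (a,b,c) = 0" using assms by (simp add: homog_def)
  have R: "(\<Sum>a\<le>k. single (a,k-a,0) (Q (a,k-a,0))) (a',b',c') = (\<Sum>a\<le>k. if (a',b',c') = (a,k-a,0) then Q (a,k-a,0) else 0)"
    by (simp add: sum_app single_def)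
  show "restr Q (a',b',c') = (\<Sum>a\<le>k. single (a,k-a,0) (Q (a,k-a,0))) (a',b',c')"
  proof (cases "c' = 0 \<and> a' + b' = k")
    case True
    then have "(\<Sum>a\<le>k. if (a',b',c') = (a,k-a,0) then Q (a,k-a,0) else 0) = (\<Sum>a\<le>k. if a = a' then Q (a',b',0) else 0)"
      by (intro sum.cong) auto
    also have "\<dots> = Q (a',b',0)" using True by simp
    finally show ?thesis using True R by (simp add: restr_def)
  next
    case False
    then have "(\<Sum>a\<le>k. if (a',b',c') = (a,k-a,0) then Q (a,k-a,0) else 0) = 0"
      by (intro sum.neutral) auto
    then show ?thesis using False R hq by (auto simp: restr_def)
  qed
qed

definition "DD k = (\<lambda>p. single (fst p, k - fst p, 0) (axis (snd p) 1)) ` ({..k} \<times> (UNIV :: 2 set))"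

lemma DD_fin: "finite (DD k)" by (simp add: DD_def)
lemma DD_card: "card (DD k) \<le> 2 * k + 2"
proof -
  have "card (DD k) \<le> card ({..k} \<times> (UNIV :: 2 set))" unfolding DD_def by (rule card_image_le) simp
  also have "\<dots> = (k+1) * 2" by (simp add: card_cartesian_product)
  finally show ?thesis by simp
qed

lemma single_exp: "single m v = (\<Sum>i\<in>UNIV. sc (v$i) (single m (axis i 1)))"
proof (rule ext)
  fix m'
  show "single m v m' = (\<Sum>i\<in>UNIV. sc (v$i) (single m (axis i 1))) m'"
    by (simp add: sum_app sc_app single_def basis_expansion)
qed

lemma restr_span: assumes "homog k Q" shows "restr Q \<in> SP.span (DD k)"
proof -
  have "single (a,k-a,0) v \<in> SP.span (DD k)" if "a \<le> k" for a v
  proof -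
    have "single (a,k-a,0) (axis i 1) \<in> DD k" for i
      unfolding DD_def using that by (auto intro!: image_eqI[where x="(a,i)"])
    then show ?thesis unfolding single_exp[of _ v]
      by (intro SP.span_sum SP.span_scale SP.span_base)
  qed
  then show ?thesis unfolding restr_exp[OF assms] by (intro SP.span_sum) auto
qed

lemma Mk_subspace: "SP.subspace (Mk E1 E2 E3 k)"
  unfolding SP.subspace_def Mk_def
  by (auto simp: lin_0[OF lin_D] lin_add[OF lin_D] lin_sc[OF lin_D] homog_def plus_fun_apply sc_app zero_fun_apply)

context spin begin

lemma Fspan: assumes P: "P \<in> Mk E1 E2 E3 k" shows "\<exists>c. P = (\<Sum>j\<le>2*k+1. sc (c j) (F j))"
proof -
  define N where "N = 2*k+1"
  define B where "B = F ` {..N}"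
  have injF: "inj_on F {..N}" using Finj by (simp add: N_def)
  have Bsub: "B \<subseteq> Mk E1 E2 E3 k" using FMk by (auto simp: B_def)
  have finB: "finite B" by (simp add: B_def)
  have cardB: "card B = N + 1" using card_image[OF injF] by (simp add: B_def)
  have indB: "SP.independent B"
  proof
    assume "SP.dependent B"
    then obtain u where u: "\<exists>v\<in>B. u v \<noteq> 0" "(\<Sum>v\<in>B. sc (u v) v) = 0"
      using SP.dependent_finite[OF finB] by blast
    have "(\<Sum>j\<le>N. sc (u (F j)) (F j)) = 0"
      using u(2) unfolding B_def by (simp add: sum.reindex[OF injF])
    then have "\<forall>j\<le>N. u (F j) = 0" using Findep[of N] by (simp add: N_def)
    then show False using u(1) by (auto simp: B_def)
  qed
  have "P \<in> SP.span B"
  proof (rule ccontr)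
    assume nP: "P \<notin> SP.span B"
    have ind: "SP.independent (insert P B)" by (rule SP.independent_insertI[OF nP indB])
    have PnB: "P \<notin> B" using nP SP.span_base by blast
    have sub: "insert P B \<subseteq> Mk E1 E2 E3 k" using Bsub P by simp
    have spsub: "SP.span (insert P B) \<subseteq> Mk E1 E2 E3 k" by (rule SP.span_minimal[OF sub Mk_subspace])
    have mh: "module_hom sc sc restr" using lin_restr by (simp add: lin_def)
    have injR: "inj_on restr (Mk E1 E2 E3 k)"
      unfolding module_hom.inj_on_iff_eq_0[OF mh Mk_subspace]
    proof (intro ballI impI)
      fix Q assume Q: "Q \<in> Mk E1 E2 E3 k" and r: "restr Q = 0"
      show "Q = 0"
      proof (rule dirac_unique[OF c3])
        show "D Q = 0" using Q by (simp add: Mk_def)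
        fix a b show "Q (a,b,0) = 0" using fun_cong[OF r, of "(a,b,0)"] by (simp add: restr_def zero_fun_apply)
      qed
    qed
    have indR: "SP.independent (restr ` insert P B)"
      by (rule module_hom.independent_injective_image[OF mh ind inj_on_subset[OF injR spsub]])
    have "restr ` insert P B \<subseteq> SP.span (DD k)"
      using sub by (auto simp: Mk_def intro!: restr_span)
    then have "card (restr ` insert P B) \<le> card (DD k)"
      using SP.independent_span_bound[OF DD_fin indR] by blast
    moreover have "card (restr ` insert P B) = N + 2"
      using card_image[OF inj_on_subset[OF injR sub]] PnB finB cardB by simp
    ultimately show False using DD_card[of k] by (simp add: N_def)
  qed
  then obtain u where "P = (\<Sum>v\<in>B. sc (u v) v)"
    using SP.span_finite[OF finB] by auto
  then have "P = (\<Sum>j\<le>N. sc (u (F j)) (F j))" unfolding B_def by (simp add: sum.reindex[OF injF])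
  then show ?thesis by (auto simp only: N_def)
qed

end

theorem proposition3p1:
  fixes E1 E2 E3 :: "complex^2^2" and vp vm :: "complex^2" and k :: nat
  assumes "E1 ** E1 = - mat 1" and "E2 ** E2 = - mat 1" and "E3 ** E3 = - mat 1"
    and "E1 ** E2 + E2 ** E1 = 0" and "E1 ** E3 + E3 ** E1 = 0" and "E2 ** E3 + E3 ** E2 = 0"
    and "vp \<noteq> 0" and "(-\<i>) *s ((E1 ** E2) *v vp) = vp"
    and "vm \<noteq> 0" and "(-\<i>) *s ((E1 ** E2) *v vm) = - vm"
  shows "is_basis_fam (Fj E1 E2 E3 k vp) (2*k+1) (Mk E1 E2 E3 k)
    \<and> (\<forall>j\<le>2*k+1. Htil E1 E2 (Fj E1 E2 E3 k vp j)
          = sc (of_nat k + 1/2 - of_nat j) (Fj E1 E2 E3 k vp j))"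
proof -
  interpret spin E1 E2 E3 vp k
    by unfold_locales (use assms in auto)
  have 1: "\<forall>j\<le>2*k+1. F j \<in> Mk E1 E2 E3 k" using FMk by blast
  have 2: "\<forall>c. (\<Sum>j\<le>2*k+1. sc (c j) (F j)) = 0 \<longrightarrow> (\<forall>j\<le>2*k+1. c j = 0)"
    using Findep by blast
  have 3: "\<forall>P\<in>Mk E1 E2 E3 k. \<exists>c. P = (\<Sum>j\<le>2*k+1. sc (c j) (F j))" using Fspan by blast
  have 4: "\<forall>j\<le>2*k+1. H (F j) = sc (of_nat k + 1/2 - of_nat j) (F j)"
    using FH unfolding lam_def by blast
  show ?thesis unfolding is_basis_fam_def using 1 2 3 4 by blast
qed


end
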